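(* Let $\sum_{\mathbf n\in\mathbb N_0^d}a_{\mathbf n}W_{\mathbf n}$ be a $d$-fold Walsh series and $\tau$ the quasimeasure generated by it. If $\mathbf g\notin\operatorname{supp}\tau$, then there is $w=w(\mathbf g)\in\mathbb N_0$ such that $S_{2^w\mathbf M}(\mathbf g)=0$ for all $\mathbf M\in\mathbb N^d$. As $w$ one may take the smallest rank of a dyadic cube $\Delta^{(w)}\ni\mathbf g$ such that $\tau(\Delta)=0$ for every dyadic cube $\Delta\subset\Delta^{(w)}$.
   Context: Fix $d\ge2$. $\mathbb G$ is the dyadic group: sequences $g=(g_k)_{k\ge0}$, $g_k\in\{0,1\}$, coordinatewise addition mod 2, product topology; $\mathbb G^d$ its $d$-th power. For $n\in\mathbb N_0$, $n=\sum_kn_k2^k$, $n_k\in\{0,1\}$. Dyadic interval of rank $k$: $\Delta^{(k)}_m=\{g: g_t=m_{k-1-t},\ 0\le t<k\}$; dyadic cube of rank $k$: $\Delta^{(k)}_{\mathbf m}=\prod_l\Delta^{(k)}_{m^l}$. Vector order coordinatewise, $\mathbf 1=(1,\dots,1)$. Walsh functions $W_n(g)=\prod_k(-1)^{g_kn_k}$, $W_{\mathbf n}(\mathbf g)=\prod_lW_{n^l}(g^l)$. Partial sums $S_{\mathbf N}(\mathbf g)=\sum_{\mathbf n<\mathbf N}a_{\mathbf n}W_{\mathbf n}(\mathbf g)$. Quasimeasure: $\tau$ on dyadic cubes with $\tau(\Delta^{(k)}_{\mathbf m})=\sum_{\boldsymbol\sigma\in\{0,1\}^d}\tau(\Delta^{(k+1)}_{2\mathbf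 m+\boldsymbol\sigma})$; generated by the series via $\tau(\Delta^{(k)})=2^{-kd}S_{2^k\mathbf 1}(\mathbf g)$, $\mathbf g\in\Delta^{(k)}$. The support $\operatorname{supp}\tau$ is $\mathbb G^d\setminus U$, where $U$ is the union of all dyadic cubes $\Delta_0$ such that $\tau(\Delta)=0$ for every dyadic cube $\Delta\subset\Delta_0$. *)

theory Defs
  imports Complex_Main
begin

text \<open>Dyadic group G: sequences nat => bool (bit g k = g_k). The d-th power G^d is
  modelled as 'd => (nat => bool) for a finite index type 'd with CARD('d) = d.
  Multi-indices in N_0^d are 'd => nat.\<close>

type_synonym dyadic = "nat \<Rightarrow> bool"

definition walsh :: "nat \<Rightarrow> dyadic \<Rightarrow> real" where
  "walsh n g = (\<Prod>k<n. if g k \<and> bit n k then -1 else 1)"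

definition walsh_d :: "('d::finite \<Rightarrow> nat) \<Rightarrow> ('d \<Rightarrow> dyadic) \<Rightarrow> real" where
  "walsh_d n g = (\<Prod>l\<in>UNIV. walsh (n l) (g l))"

definition psum :: "(('d::finite \<Rightarrow> nat) \<Rightarrow> real) \<Rightarrow> ('d \<Rightarrow> nat) \<Rightarrow> ('d \<Rightarrow> dyadic) \<Rightarrow> real" where
  "psum a N g = (\<Sum>n\<in>{n. \<forall>l. n l < N l}. a n * walsh_d n g)"

definition dint :: "nat \<Rightarrow> nat \<Rightarrow> dyadic set" where
  "dint k m = {g. \<forall>t<k. g t = bit m (k - 1 - t)}"

definition valid_idx :: "nat \<Rightarrow> ('d::finite \<Rightarrow> nat) \<Rightarrow> bool" where
  "valid_idx k m \<longleftrightarrow> (\<forall>l. m l < 2 ^ k)"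

definition dcube :: "nat \<Rightarrow> ('d::finite \<Rightarrow> nat) \<Rightarrow> ('d \<Rightarrow> dyadic) set" where
  "dcube k m = {g. \<forall>l. g l \<in> dint k (m l)}"

definition qmeas :: "(('d::finite \<Rightarrow> nat) \<Rightarrow> real) \<Rightarrow> nat \<Rightarrow> ('d \<Rightarrow> nat) \<Rightarrow> real" where
  "qmeas a k m = psum a (\<lambda>_. 2 ^ k) (SOME g. g \<in> dcube k m) / 2 ^ (k * card (UNIV :: 'd set))"

definition null_cube :: "(('d::finite \<Rightarrow> nat) \<Rightarrow> real) \<Rightarrow> nat \<Rightarrow> ('d \<Rightarrow> nat) \<Rightarrow> bool" where
  "null_cube a k0 m0 \<longleftrightarrow>
     (\<forall>k m. valid_idx k m \<and> dcube k m \<subseteq> dcube k0 m0 \<longrightarrow> qmeas a k m = 0)"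

definition qsupp :: "(('d::finite \<Rightarrow> nat) \<Rightarrow> real) \<Rightarrow> ('d \<Rightarrow> dyadic) set" where
  "qsupp a = UNIV - \<Union>{dcube k m | k m. valid_idx k m \<and> null_cube a k m}"

end

theory Submission
  imports Defs "HOL-Library.FuncSet"
begin

lemma nbit: "(n::nat) < 2^K \<Longrightarrow> K \<le> k \<Longrightarrow> \<not> bit n k"
  by (metis bit_take_bit_iff less_le_not_le take_bit_nat_eq_self)

lemma bit_div: "bit ((n::nat) div 2^w) i = bit n (w+i)"
  by (simp add: bit_iff_odd div_exp_eq)

lemma exists_idx: "\<exists>m::nat. m < 2^K \<and> (\<forall>t<K. bit m (K-1-t) = P t)"
proof (induction K)
  case 0 then show ?case by auto
next
  case (Suc K)
  then obtain m :: nat where m: "m < 2^K" "\<forall>t<K. bit m (K-1-t) = P t" by blast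
  define m' where "m' = 2*m + (if P K then 1 else 0)"
  have "m' < 2^Suc K" using m(1) unfolding m'_def by auto
  moreover have "\<forall>t<Suc K. bit m' (Suc K - 1 - t) = P t"
  proof (intro allI impI)
    fix t assume t: "t < Suc K"
    show "bit m' (Suc K - 1 - t) = P t"
    proof (cases "t = K")
      case True then show ?thesis unfolding m'_def by (simp add: bit_0)
    next
      case False
      then have "Suc K - 1 - t = Suc (K - 1 - t)" using t by auto
      then show ?thesis using m(2) False t unfolding m'_def by (simp add: bit_Suc)
    qed
  qed
  ultimately show ?case by blast
qed

lemma walsh_local:
  assumes "\<forall>k<K. g k = g' k" "n < 2^K"
  shows "walsh n g = walsh n g'"
  unfolding walsh_def
proof (rule prod.cong[OF refl])
  fix k assume "k \<in> {..<n}"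
  show "(if g k \<and> bit n k then -1 else 1) = (if g' k \<and> bit n k then -1 else (1::real))"
  proof (cases "k < K")
    case True then show ?thesis using assms by auto
  next
    case False then show ?thesis using nbit[OF assms(2)] by auto
  qed
qed

lemma psum_local:
  fixes g g' :: "'d::finite \<Rightarrow> dyadic"
  assumes "\<forall>l. \<forall>k<K. g l k = g' l k"
  shows "psum a (\<lambda>_. 2^K) g = psum a (\<lambda>_. 2^K) g'"
  unfolding psum_def walsh_d_def
proof (rule sum.cong[OF refl], rule arg_cong[where f="\<lambda>x. _ * x"], rule prod.cong[OF refl])
  fix n :: "'d \<Rightarrow> nat" and l assume "n \<in> {n. \<forall>l. n l < 2^K}"
  then have "n l < 2^K" by auto
  then show "walsh (n l) (g l) = walsh (n l) (g' l)" using assms by (intro walsh_local) auto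
qed

lemma walsh_flip:
  "walsh n (g(t := \<not> g t)) = (if bit n t then -1 else 1) * walsh n g"
proof (cases "t < n")
  case True
  have fin: "finite {..<n}" by simp
  have A: "walsh n (g(t := \<not> g t)) = (if \<not> g t \<and> bit n t then -1 else 1) *
     (\<Prod>k\<in>{..<n}-{t}. if (g(t := \<not> g t)) k \<and> bit n k then -1 else (1::real))"
    unfolding walsh_def using True by (subst prod.remove[OF fin, of t]) auto
  have B: "(\<Prod>k\<in>{..<n}-{t}. if (g(t := \<not> g t)) k \<and> bit n k then -1 else (1::real))
      = (\<Prod>k\<in>{..<n}-{t}. if g k \<and> bit n k then -1 else (1::real))"
    by (rule prod.cong) auto
  have C: "walsh n g = (if g t \<and> bit n t then -1 else 1) *
     (\<Prod>k\<in>{..<n}-{t}. if g k \<and> bit n k then -1 else (1::real))"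
    unfolding walsh_def using True by (subst prod.remove[OF fin, of t]) auto
  show ?thesis unfolding A B C by (cases "g t"; cases "bit n t") simp_all
next
  case False
  have "n < 2^t" using False
    by (meson less_exp order_less_le_trans not_less order.strict_implies_order power_increasing_iff one_less_numeral_iff semiring_norm(76))
  then have nb: "\<not> bit n t" using nbit by blast
  have "walsh n (g(t := \<not> g t)) = walsh n g"
    unfolding walsh_def using False by (intro prod.cong) auto
  then show ?thesis using nb by simp
qed

lemma walsh_d_flip:
  "walsh_d n (h(l := (h l)(t := \<not> h l t))) = (if bit (n l) t then -1 else 1) * walsh_d n h"
proof -
  have fin: "finite (UNIV::'a set)" by simp
  have "walsh_d n (h(l := (h l)(t := \<not> h l t))) =
     walsh (n l) ((h l)(t := \<not> h l t)) * (\<Prod>l'\<in>UNIV-{l}. walsh (n l') (h l'))"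
    unfolding walsh_d_def by (subst prod.remove[OF fin, of l]) (auto intro!: prod.cong)
  also have "walsh_d n h = walsh (n l) (h l) * (\<Prod>l'\<in>UNIV-{l}. walsh (n l') (h l'))"
    unfolding walsh_d_def by (subst prod.remove[OF fin, of l]) auto
  ultimately show ?thesis by (simp add: walsh_flip)
qed

definition tsum :: "(('d::finite \<Rightarrow> nat) \<Rightarrow> real) \<Rightarrow> ('d \<Rightarrow> nat) set \<Rightarrow> ('d \<Rightarrow> dyadic) \<Rightarrow> real" where
  "tsum a F h = (\<Sum>n\<in>F. a n * walsh_d n h)"

lemma sel:
  assumes fin: "finite F" and z: "\<forall>h\<in>dcube w m. tsum a F h = 0" and tw: "w \<le> t"
    and h: "h \<in> dcube w m"
  shows "tsum a {n\<in>F. bit (n l) t = b} h = 0"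
proof -
  define h' where "h' = h(l := (h l)(t := \<not> h l t))"
  have h': "h' \<in> dcube w m" using h tw unfolding h'_def dcube_def dint_def by auto
  define s where "s n = (if bit (n l) t then -1 else (1::real))" for n :: "'a \<Rightarrow> nat"
  define sb where "sb = (if b then -1 else (1::real))"
  have "tsum a {n\<in>F. bit (n l) t = b} h = (\<Sum>n\<in>F. if bit (n l) t = b then a n * walsh_d n h else 0)"
    unfolding tsum_def using fin by (simp add: sum.inter_filter)
  also have "\<dots> = (\<Sum>n\<in>F. (a n * walsh_d n h + sb * (a n * walsh_d n h')) / 2)"
    unfolding h'_def walsh_d_flip sb_def by (rule sum.cong) auto
  also have "\<dots> = (tsum a F h + sb * tsum a F h') / 2"
    unfolding tsum_def by (simp add: sum_divide_distrib[symmetric] sum.distrib sum_distrib_left)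
  also have "\<dots> = 0" using z h h' by simp
  finally show ?thesis .
qed


lemma box_finite: "finite {n::'d::finite \<Rightarrow> nat. \<forall>l. n l < N l}"
proof -
  have "{n::'d \<Rightarrow> nat. \<forall>l. n l < N l} = PiE UNIV (\<lambda>l. {..<N l})"
    by (auto simp: PiE_def extensional_def)
  then show ?thesis by (simp add: finite_PiE)
qed

lemma div_iff:
  fixes n :: nat
  assumes "(q::nat) < 2^(K-w)" "w \<le> K"
  shows "(n < 2^K \<and> (\<forall>t\<in>{w..<K}. bit n t = bit q (t-w))) \<longleftrightarrow> n div 2^w = q"
proof
  assume A: "n < 2^K \<and> (\<forall>t\<in>{w..<K}. bit n t = bit q (t-w))"
  have "bit (n div 2^w) i = bit q i" for i
    proof (cases "w + i < K")
      case True then show ?thesis using A by (auto simp: bit_div)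
    next
      case False
      then have "\<not> bit n (w+i)" using A nbit[of n K "w+i"] by auto
      moreover have "\<not> bit q i" using assms False nbit[of q "K-w" i] by auto
      ultimately show ?thesis by (simp add: bit_div)
    qed
  then show "n div 2^w = q" by (simp add: bit_eq_iff)
next
  assume B: "n div 2^w = q"
  have "n < q * 2^w + 2^w" using B by (metis div_less_iff_less_mult distrib_right mult_1 pos2 zero_less_power less_add_one)
  also have "\<dots> = (q+1) * 2^w" by simp
  also have "\<dots> \<le> 2^(K-w) * 2^w" using assms(1) by (intro mult_right_mono) auto
  also have "\<dots> = 2^K" using assms(2) by (simp add: power_add[symmetric])
  finally have "n < 2^K" .
  moreover have "\<forall>t\<in>{w..<K}. bit n t = bit q (t-w)"
    using B bit_div[of n w] by auto
  ultimately show "n < 2^K \<and> (\<forall>t\<in>{w..<K}. bit n t = bit q (t-w))" by blast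
qed

lemma block_zero:
  fixes a :: "('d::finite \<Rightarrow> nat) \<Rightarrow> real"
  assumes base: "\<forall>h\<in>dcube w m. tsum a {n. \<forall>l. n l < 2^K} h = 0" and wK: "w \<le> K"
    and q: "\<forall>l. q l < 2^(K-w)" and h: "h \<in> dcube w m"
  shows "tsum a {n. \<forall>l. n l div 2^w = q l} h = 0"
proof -
  define B where "B S = {n::'d \<Rightarrow> nat. (\<forall>l. n l < 2^K) \<and>
      (\<forall>p\<in>S. bit (n (fst p)) (snd p) = bit (q (fst p)) (snd p - w))}" for S :: "('d \<times> nat) set"
  have finB: "finite (B S)" for S
    by (rule finite_subset[OF _ box_finite[of "\<lambda>_. 2^K"]]) (auto simp: B_def)
  have claim: "S \<subseteq> UNIV \<times> {w..<K} \<Longrightarrow> \<forall>h\<in>dcube w m. tsum a (B S) h = 0" if "finite S" for S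
    using that
  proof (induction S rule: finite_induct)
    case empty then show ?case using base by (simp add: B_def)
  next
    case (insert p S)
    obtain l t where p: "p = (l, t)" by force
    have tw: "w \<le> t" using insert.prems p by auto
    have eq: "B (insert p S) = {n\<in>B S. bit (n l) t = bit (q l) (t - w)}"
      unfolding B_def p by auto
    show ?case unfolding eq
      using sel[OF finB, where t=t and l=l] insert tw by auto
  qed
  have "B (UNIV \<times> {w..<K}) = {n. \<forall>l. n l div 2^w = q l}"
  proof -
    have "n \<in> B (UNIV \<times> {w..<K}) \<longleftrightarrow> (\<forall>l. n l < 2^K \<and> (\<forall>t\<in>{w..<K}. bit (n l) t = bit (q l) (t-w)))" for n
      unfolding B_def by auto
    then show ?thesis using div_iff[OF _ wK] q by auto
  qed
  then show ?thesis using claim[of "UNIV \<times> {w..<K}"] h by auto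
qed


lemma base_zero:
  fixes a :: "('d::finite \<Rightarrow> nat) \<Rightarrow> real"
  assumes null: "null_cube a w m" and wK: "w \<le> K" and h: "h \<in> dcube w m"
  shows "tsum a {n. \<forall>l. n l < 2^K} h = 0"
proof -
  have "\<forall>l. \<exists>ml::nat. ml < 2^K \<and> (\<forall>t<K. bit ml (K-1-t) = h l t)"
    using exists_idx by blast
  then obtain m' :: "'d \<Rightarrow> nat" where m0: "\<forall>l. m' l < 2^K \<and> (\<forall>t<K. bit (m' l) (K-1-t) = h l t)"
    by (rule choice[THEN exE]) blast
  have m': "\<And>l. m' l < 2^K" "\<And>l t. t < K \<Longrightarrow> bit (m' l) (K-1-t) = h l t"
    using m0 by auto
  have v: "valid_idx K m'" using m' by (simp add: valid_idx_def)
  have hin: "h \<in> dcube K m'" using m' by (auto simp: dcube_def dint_def)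
  have sub: "dcube K m' \<subseteq> dcube w m"
  proof
    fix x assume x: "x \<in> dcube K m'"
    have "x l t = h l t" if "t < K" for l t
    proof -
      have "x l \<in> dint K (m' l)" using x by (simp add: dcube_def)
      then have "x l t = bit (m' l) (K-1-t)" using that by (simp add: dint_def)
      then show ?thesis using m'(2)[OF that, of l] by simp
    qed
    then show "x \<in> dcube w m" using h wK by (auto simp: dcube_def dint_def)
  qed
  have "qmeas a K m' = 0" using null v sub by (auto simp: null_cube_def)
  then have z: "psum a (\<lambda>_. 2 ^ K) (SOME g. g \<in> dcube K m') = 0"
    by (simp add: qmeas_def)
  have s: "(SOME g. g \<in> dcube K m') \<in> dcube K m'" using hin by (metis someI)
  have "\<forall>l. \<forall>k<K. (SOME g. g \<in> dcube K m') l k = h l k"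
    using s hin by (auto simp: dcube_def dint_def)
  then have "psum a (\<lambda>_. 2 ^ K) h = psum a (\<lambda>_. 2 ^ K) (SOME g. g \<in> dcube K m')"
    by (intro psum_local) auto
  then have "psum a (\<lambda>_. 2 ^ K) h = 0" using z by simp
  then show ?thesis by (simp add: tsum_def psum_def)
qed

lemma dl: "(n::nat) div 2^w < M \<longleftrightarrow> n < 2^w * M"
  by (metis div_less_iff_less_mult mult.commute pos2 zero_less_power)

lemma main:
  fixes a :: "('d::finite \<Rightarrow> nat) \<Rightarrow> real"
  assumes null: "null_cube a w m" and g: "g \<in> dcube w m"
  shows "psum a (\<lambda>l. 2 ^ w * M l) g = 0"
proof -
  define S where "S = (\<Sum>l\<in>UNIV. M l)"
  define K where "K = w + S"
  have MS: "M l \<le> S" for l unfolding S_def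
    by (rule member_le_sum) auto
  have MS2: "M l < 2^S" for l using MS[of l] less_exp[of S] by linarith
  have wK: "w \<le> K" by (simp add: K_def)
  have base: "\<forall>h\<in>dcube w m. tsum a {n. \<forall>l. n l < 2^K} h = 0"
    using base_zero[OF null wK] by blast
  define T where "T = {n::'d \<Rightarrow> nat. \<forall>l. n l < 2^w * M l}"
  define Q where "Q = {q::'d \<Rightarrow> nat. \<forall>l. q l < M l}"
  have "psum a (\<lambda>l. 2 ^ w * M l) g = tsum a T g" by (simp add: psum_def tsum_def T_def)
  also have "\<dots> = (\<Sum>q\<in>Q. tsum a {n\<in>T. (\<lambda>l. n l div 2^w) = q} g)"
    unfolding tsum_def
  proof (rule sum.group[symmetric])
    show "finite T" unfolding T_def by (rule box_finite)
    show "finite Q" unfolding Q_def by (rule box_finite)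
    show "(\<lambda>n l. n l div 2 ^ w) ` T \<subseteq> Q"
    proof
      fix y assume "y \<in> (\<lambda>n l. n l div 2 ^ w) ` T"
      then obtain n where n: "n \<in> T" "y = (\<lambda>l. n l div 2 ^ w)" by blast
      have "n l div 2^w < M l" for l using n(1) dl[of "n l" w "M l"] by (simp add: T_def)
      then show "y \<in> Q" using n(2) by (simp add: Q_def)
    qed
  qed
  also have "\<dots> = (\<Sum>q\<in>Q. 0)"
  proof (rule sum.cong[OF refl])
    fix q assume q: "q \<in> Q"
    have eq: "{n\<in>T. (\<lambda>l. n l div 2^w) = q} = {n. \<forall>l. n l div 2^w = q l}"
    proof (intro set_eqI iffI)
      fix n assume "n \<in> {n\<in>T. (\<lambda>l. n l div 2^w) = q}"
      then show "n \<in> {n. \<forall>l. n l div 2^w = q l}" by auto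
    next
      fix n assume n: "n \<in> {n. \<forall>l. n l div 2^w = q l}"
      then have "n l < 2^w * M l" for l using q dl[of "n l" w "M l"] by (auto simp: Q_def)
      then show "n \<in> {n\<in>T. (\<lambda>l. n l div 2^w) = q}" using n by (auto simp: T_def)
    qed
    have "\<forall>l. q l < 2^(K-w)" using q MS2 by (auto simp: Q_def K_def intro: less_trans)
    then show "tsum a {n\<in>T. (\<lambda>l. n l div 2^w) = q} g = 0"
      unfolding eq using block_zero[OF base wK _ g] by blast
  qed
  finally show ?thesis by simp
qed

theorem proposition4:
  fixes a :: "('d::finite \<Rightarrow> nat) \<Rightarrow> real" and g :: "'d \<Rightarrow> dyadic"
  assumes "card (UNIV :: 'd set) \<ge> 2"
    and "g \<notin> qsupp a"
  shows "(\<exists>w::nat. \<forall>M. (\<forall>l. M l \<ge> 1) \<longrightarrow> psum a (\<lambda>l. 2 ^ w * M l) g = 0)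
       \<and> (let w = (LEAST w. \<exists>m. valid_idx w m \<and> g \<in> dcube w m \<and> null_cube a w m)
          in \<forall>M. (\<forall>l. M l \<ge> 1) \<longrightarrow> psum a (\<lambda>l. 2 ^ w * M l) g = 0)"
proof -
  have ex: "\<exists>w m. valid_idx w m \<and> g \<in> dcube w m \<and> null_cube a w m"
    using assms(2) by (auto simp: qsupp_def)
  define w where "w = (LEAST w. \<exists>m. valid_idx w m \<and> g \<in> dcube w m \<and> null_cube a w m)"
  have "\<exists>m. valid_idx w m \<and> g \<in> dcube w m \<and> null_cube a w m"
    unfolding w_def using ex by (rule LeastI_ex)
  then obtain m where m: "g \<in> dcube w m" "null_cube a w m" by blast
  have all: "\<forall>M. (\<forall>l. M l \<ge> 1) \<longrightarrow> psum a (\<lambda>l. 2 ^ w * M l) g = 0"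
    using main[OF m(2) m(1)] by blast
  then show ?thesis unfolding w_def[symmetric] Let_def by blast
qed

end
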